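(* Let $\Gamma$ be a hyperbolic graph such that $\operatorname{rank}\mathcal{F}(\Gamma)=20$, and let $D\ge2$. Then the $2D$-polarized lattice $\mathcal{F}_h(\Gamma)$ can be geometric only if $2D=h_\Gamma^2$.
   Context: Graphs are finite, simple. $\mathbb{Z}\Gamma$ is the lattice freely generated by the vertices of $\Gamma$ with $v^2=-2$, $u\cdot v=1$ if $u,v$ adjacent, $0$ otherwise; $\mathcal{F}(\Gamma)=\mathbb{Z}\Gamma/\ker\mathbb{Z}\Gamma$, where $\ker L$ is the kernel of the form. $\mathcal{F}_h(\Gamma)=(\mathbb{Z}\Gamma\oplus\mathbb{Z}h)/\ker$, with $h^2=2D$ and $v\cdot h=1$ for all vertices $v$. $\Gamma$ is hyperbolic if $\mathbb{Z}\Gamma\otimes\mathbb{R}$ has positive inertia index $1$. The intrinsic polarization $h_\Gamma\in\mathbb{Z}\Gamma\otimes\mathbb{Q}$ satisfies $v\cdot h_\Gamma=1$ for all vertices; $h_\Gamma^2$ is well defined when it exists. A $2D$-polarized lattice $(S,h)$ (nondegenerate, hyperbolic, $h\in S$, $h^2=2D$) is admissible if it contains no vector $e$ with $e^2=-2$, $e\cdot h=0$, and no vector $e$ with $e^2=0$, $e\cdot h=2$; it is geometric if it is admissible and admits a primitive embedding into the $K3$ lattice $\mathbf{L}=\mathbf U^3\oplus\mathbf E_8(-1)^2$ (the unique even unimodular lattice of rank $22$ and signature $-16$). *)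

theory Defs
  imports Complex_Main
begin

text \<open>A (possibly degenerate) integral lattice is represented as Z^I for a finite index
set I, with symmetric bilinear form given by a Gram function G. Vectors are functions
on the index type; only their values on I matter.\<close>

definition bform :: "('i \<Rightarrow> 'i \<Rightarrow> int) \<Rightarrow> 'i set \<Rightarrow> ('i \<Rightarrow> 'r::comm_ring_1) \<Rightarrow> ('i \<Rightarrow> 'r) \<Rightarrow> 'r" where
  "bform G I x y = (\<Sum>i\<in>I. \<Sum>j\<in>I. x i * of_int (G i j) * y j)"

definition unitv :: "'i \<Rightarrow> 'i \<Rightarrow> 'r::zero_neq_one" where
  "unitv v = (\<lambda>i. if i = v then 1 else 0)"

text \<open>Rank of the quotient lattice Z^I / ker: the maximal number of elements of Z^I
whose images in the quotient are Z-linearly independent.\<close>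
definition lat_rank :: "('i \<Rightarrow> 'i \<Rightarrow> int) \<Rightarrow> 'i set \<Rightarrow> nat" where
  "lat_rank G I = (GREATEST k. \<exists>xs :: nat \<Rightarrow> 'i \<Rightarrow> int.
      \<forall>c :: nat \<Rightarrow> int.
        (\<forall>y. bform G I (\<lambda>i. \<Sum>j<k. c j * xs j i) y = 0) \<longrightarrow> (\<forall>j<k. c j = 0))"

text \<open>Positive inertia index of the real form on Z^I \<otimes> R: the maximal dimension
of a subspace on which the form is positive definite.\<close>
definition pos_index :: "('i \<Rightarrow> 'i \<Rightarrow> int) \<Rightarrow> 'i set \<Rightarrow> nat" where
  "pos_index G I = (GREATEST k. \<exists>xs :: nat \<Rightarrow> 'i \<Rightarrow> real.
      \<forall>c :: nat \<Rightarrow> real. (\<exists>j<k. c j \<noteq> 0) \<longrightarrow>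
        bform G I (\<lambda>i. \<Sum>j<k. c j * xs j i) (\<lambda>i. \<Sum>j<k. c j * xs j i) > 0)"

definition ggram :: "('a \<Rightarrow> 'a \<Rightarrow> bool) \<Rightarrow> 'a \<Rightarrow> 'a \<Rightarrow> int" where
  "ggram E u v = (if u = v then -2 else if E u v then 1 else 0)"

text \<open>Index None stands for h, Some v for the vertex v.\<close>
definition hgram :: "('a \<Rightarrow> 'a \<Rightarrow> bool) \<Rightarrow> int \<Rightarrow> 'a option \<Rightarrow> 'a option \<Rightarrow> int" where
  "hgram E D p q = (case (p, q) of
       (None, None) \<Rightarrow> 2 * D
     | (None, Some _) \<Rightarrow> 1
     | (Some _, None) \<Rightarrow> 1
     | (Some u, Some v) \<Rightarrow> ggram E u v)"

definition hindex :: "'a set \<Rightarrow> 'a option set" where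
  "hindex V = insert None (Some ` V)"

section \<open>The K3 lattice U^3 + E8(-1)^2 on indices 0..21\<close>

definition e8adj :: "nat \<Rightarrow> nat \<Rightarrow> bool" where
  "e8adj a b = ((a \<le> 6 \<and> b \<le> 6 \<and> (a = b + 1 \<or> b = a + 1)) \<or> {a, b} = {4, 7})"

definition e8m :: "nat \<Rightarrow> nat \<Rightarrow> int" where
  "e8m a b = (if a = b then -2 else if e8adj a b then 1 else 0)"

definition k3gram :: "nat \<Rightarrow> nat \<Rightarrow> int" where
  "k3gram i j =
     (if i < 6 \<and> j < 6 then (if i div 2 = j div 2 \<and> i \<noteq> j then 1 else 0)
      else if 6 \<le> i \<and> i < 14 \<and> 6 \<le> j \<and> j < 14 then e8m (i - 6) (j - 6)
      else if 14 \<le> i \<and> i < 22 \<and> 14 \<le> j \<and> j < 22 then e8m (i - 14) (j - 14)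
      else 0)"

definition inL :: "(nat \<Rightarrow> int) \<Rightarrow> bool" where
  "inL y = (\<forall>k. k \<ge> 22 \<longrightarrow> y k = 0)"

text \<open>The polarized lattice is S = Z^I / ker with polarization the image of hv.
S is nondegenerate by construction; hyperbolicity of S is that of Z^I \<otimes> R.\<close>
definition polarized :: "('i \<Rightarrow> 'i \<Rightarrow> int) \<Rightarrow> 'i set \<Rightarrow> ('i \<Rightarrow> int) \<Rightarrow> int \<Rightarrow> bool" where
  "polarized G I hv D = (finite I \<and> pos_index G I = 1 \<and> bform G I hv hv = 2 * D)"

text \<open>Vectors of S are images of vectors of Z^I, so conditions on S lift to Z^I.\<close>
definition admissible :: "('i \<Rightarrow> 'i \<Rightarrow> int) \<Rightarrow> 'i set \<Rightarrow> ('i \<Rightarrow> int) \<Rightarrow> int \<Rightarrow> bool" where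
  "admissible G I hv D = (polarized G I hv D \<and>
     \<not> (\<exists>e. bform G I e e = -2 \<and> bform G I e hv = 0) \<and>
     \<not> (\<exists>e. bform G I e e = 0 \<and> bform G I e hv = 2))"

text \<open>A primitive embedding S \<rightarrow> L is given by images f i \<in> L of the generators,
preserving the form, vanishing on the kernel (so it descends to S; injectivity on S
is then automatic), with primitive image.\<close>
definition prim_embeds_K3 :: "('i \<Rightarrow> 'i \<Rightarrow> int) \<Rightarrow> 'i set \<Rightarrow> bool" where
  "prim_embeds_K3 G I = (\<exists>f :: 'i \<Rightarrow> nat \<Rightarrow> int.
     (\<forall>i\<in>I. inL (f i)) \<and>
     (\<forall>i\<in>I. \<forall>j\<in>I. bform k3gram {..<22} (f i) (f j) = G i j) \<and>
     (\<forall>x. (\<forall>y. bform G I x y = 0) \<longrightarrow> (\<lambda>k. \<Sum>i\<in>I. x i * f i k) = (\<lambda>k. 0)) \<and>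
     (\<forall>y n. inL y \<and> n \<noteq> (0::int) \<and> (\<exists>x. (\<lambda>k. n * y k) = (\<lambda>k. \<Sum>i\<in>I. x i * f i k))
        \<longrightarrow> (\<exists>x. y = (\<lambda>k. \<Sum>i\<in>I. x i * f i k))))"

definition geometric :: "('i \<Rightarrow> 'i \<Rightarrow> int) \<Rightarrow> 'i set \<Rightarrow> ('i \<Rightarrow> int) \<Rightarrow> int \<Rightarrow> bool" where
  "geometric G I hv D = (admissible G I hv D \<and> prim_embeds_K3 G I)"

end

theory Submission
  imports Defs
begin

lemma exists_rel:
  fixes v :: "'j \<Rightarrow> 'k \<Rightarrow> 'f::idom"
  assumes "finite K" "finite J" "card K < card J"
  shows "\<exists>c. (\<exists>j\<in>J. c j \<noteq> 0) \<and> (\<forall>k\<in>K. (\<Sum>j\<in>J. c j * v j k) = 0)"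
  using assms
proof (induction K arbitrary: J v rule: finite_induct)
  case empty
  then obtain j where "j \<in> J" by fastforce
  then show ?case by (intro exI[of _ "\<lambda>_. 1"]) auto
next
  case (insert k K)
  show ?case
  proof (cases "\<forall>j\<in>J. v j k = 0")
    case True
    from insert.IH[of J v] insert.prems insert.hyps obtain c where
      c: "\<exists>j\<in>J. c j \<noteq> 0" "\<forall>k\<in>K. (\<Sum>j\<in>J. c j * v j k) = 0" by auto
    show ?thesis using c True by (intro exI[of _ c]) auto
  next
    case False
    then obtain j0 where j0: "j0 \<in> J" "v j0 k \<noteq> 0" by auto
    define a where "a = v j0 k"
    define u where "u = (\<lambda>j k'. a * v j k' - v j k * v j0 k')"
    have "card K < card (J - {j0})" using insert.prems insert.hyps j0 by auto
    from insert.IH[of "J - {j0}" u] this insert.prems obtain c' where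
      c': "\<exists>j\<in>J - {j0}. c' j \<noteq> 0" "\<forall>k\<in>K. (\<Sum>j\<in>J-{j0}. c' j * u j k) = 0" by auto
    define c where "c = (\<lambda>j. if j = j0 then - (\<Sum>j\<in>J-{j0}. c' j * v j k) else c' j * a)"
    have key: "(\<Sum>j\<in>J. c j * v j k') = (\<Sum>j\<in>J-{j0}. c' j * u j k')" for k'
    proof -
      have "(\<Sum>j\<in>J. c j * v j k') = c j0 * v j0 k' + (\<Sum>j\<in>J-{j0}. c j * v j k')"
        using j0 insert.prems by (simp add: sum.remove)
      also have "(\<Sum>j\<in>J-{j0}. c j * v j k') = (\<Sum>j\<in>J-{j0}. c' j * a * v j k')"
        by (rule sum.cong) (auto simp: c_def)
      moreover have "(\<Sum>j\<in>J-{j0}. c' j * u j k') = (\<Sum>j\<in>J-{j0}. c' j * a * v j k') - (\<Sum>j\<in>J-{j0}. c' j * v j k) * v j0 k'"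
        by (simp add: u_def sum_distrib_right sum_distrib_left sum_subtractf algebra_simps)
      moreover have "c j0 = - (\<Sum>j\<in>J-{j0}. c' j * v j k)" by (simp add: c_def)
      ultimately show ?thesis by simp
    qed
    have nz: "\<exists>j\<in>J. c j \<noteq> 0"
    proof -
      from c' obtain j where "j \<in> J - {j0}" "c' j \<noteq> 0" by auto
      then show ?thesis using j0 by (intro bexI[of _ j]) (auto simp: c_def a_def)
    qed
    show ?thesis
    proof (intro exI[of _ c] conjI nz ballI)
      fix k' assume "k' \<in> insert k K"
      then show "(\<Sum>j\<in>J. c j * v j k') = 0"
      proof
        assume "k' = k" then show ?thesis using key by (simp add: u_def a_def)
      next
        assume "k' \<in> K" then show ?thesis using key c' by simp
      qed
    qed
  qed
qed

lemma bform_push: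
  fixes x y :: "'i \<Rightarrow> 'r::comm_ring_1"
  assumes "\<forall>i\<in>I. \<forall>j\<in>I. G i j = bform H K (f i) (f j)"
  shows "bform G I x y = bform H K (\<lambda>k. \<Sum>i\<in>I. x i * of_int (f i k)) (\<lambda>l. \<Sum>j\<in>I. y j * of_int (f j l))"
proof -
  have "bform G I x y = (\<Sum>i\<in>I. \<Sum>j\<in>I. \<Sum>k\<in>K. \<Sum>l\<in>K. x i * of_int (f i k) * of_int (H k l) * (y j * of_int (f j l)))"
    unfolding bform_def using assms
    by (intro sum.cong refl) (simp add: bform_def of_int_sum sum_distrib_left sum_distrib_right mult_ac)
  also have "\<dots> = (\<Sum>i\<in>I. \<Sum>k\<in>K. \<Sum>j\<in>I. \<Sum>l\<in>K. x i * of_int (f i k) * of_int (H k l) * (y j * of_int (f j l)))"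
    by (intro sum.cong refl sum.swap)
  also have "\<dots> = (\<Sum>i\<in>I. \<Sum>k\<in>K. \<Sum>l\<in>K. \<Sum>j\<in>I. x i * of_int (f i k) * of_int (H k l) * (y j * of_int (f j l)))"
    by (intro sum.cong refl sum.swap)
  also have "\<dots> = (\<Sum>k\<in>K. \<Sum>i\<in>I. \<Sum>l\<in>K. \<Sum>j\<in>I. x i * of_int (f i k) * of_int (H k l) * (y j * of_int (f j l)))"
    by (rule sum.swap)
  also have "\<dots> = (\<Sum>k\<in>K. \<Sum>l\<in>K. \<Sum>i\<in>I. \<Sum>j\<in>I. x i * of_int (f i k) * of_int (H k l) * (y j * of_int (f j l)))"
    by (intro sum.cong refl sum.swap)
  also have "\<dots> = bform H K (\<lambda>k. \<Sum>i\<in>I. x i * of_int (f i k)) (\<lambda>l. \<Sum>j\<in>I. y j * of_int (f j l))"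
    unfolding bform_def apply (simp add: sum_distrib_left sum_distrib_right)
    by (intro sum.cong refl sum.swap)
  finally show ?thesis .
qed

lemma bform_cong:
  assumes "\<forall>i\<in>I. x i = x' i" "\<forall>i\<in>I. y i = y' i"
  shows "bform G I x y = bform G I x' y'"
  unfolding bform_def using assms by (intro sum.cong refl) auto

lemma bform_zero_left:
  assumes "\<forall>i\<in>I. x i = 0"
  shows "bform G I x y = 0"
  unfolding bform_def using assms by simp

lemma lat_rank_witness:
  assumes "finite I" "lat_rank G I = n"
  shows "\<exists>xs :: nat \<Rightarrow> 'i \<Rightarrow> int. \<forall>c :: nat \<Rightarrow> int.
        (\<forall>y. bform G I (\<lambda>i. \<Sum>j<n. c j * xs j i) y = 0) \<longrightarrow> (\<forall>j<n. c j = 0)"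
proof -
  let ?P = "\<lambda>k. \<exists>xs :: nat \<Rightarrow> 'i \<Rightarrow> int.
      \<forall>c :: nat \<Rightarrow> int.
        (\<forall>y. bform G I (\<lambda>i. \<Sum>j<k. c j * xs j i) y = 0) \<longrightarrow> (\<forall>j<k. c j = 0)"
  have bound: "k \<le> card I" if "?P k" for k
  proof (rule ccontr)
    assume "\<not> k \<le> card I"
    from that obtain xs where xs: "\<forall>c :: nat \<Rightarrow> int.
        (\<forall>y. bform G I (\<lambda>i. \<Sum>j<k. c j * xs j i) y = 0) \<longrightarrow> (\<forall>j<k. c j = 0)" by blast
    from exists_rel[of I "{..<k}" xs] assms \<open>\<not> k \<le> card I\<close> obtain c where
      c: "\<exists>j\<in>{..<k}. c j \<noteq> 0" "\<forall>i\<in>I. (\<Sum>j\<in>{..<k}. c j * xs j i) = 0" by auto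
    have "\<forall>y. bform G I (\<lambda>i. \<Sum>j<k. c j * xs j i) y = 0"
      using c(2) by (intro allI bform_zero_left) auto
    with xs c(1) show False by auto
  qed
  have "?P 0" by auto
  have "?P (Greatest ?P)" by (rule GreatestI_nat[of ?P 0 "card I"]) (use \<open>?P 0\<close> bound in auto)
  then show ?thesis using assms(2) unfolding lat_rank_def by simp
qed

lemma pos_index_no2:
  assumes "finite I" "pos_index G I = 1"
  shows "\<not> (\<exists>xs :: nat \<Rightarrow> 'i \<Rightarrow> real.
      \<forall>c :: nat \<Rightarrow> real. (\<exists>j<2. c j \<noteq> 0) \<longrightarrow>
        bform G I (\<lambda>i. \<Sum>j<2. c j * xs j i) (\<lambda>i. \<Sum>j<2. c j * xs j i) > 0)"
proof
  let ?P = "\<lambda>k. \<exists>xs :: nat \<Rightarrow> 'i \<Rightarrow> real.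
      \<forall>c :: nat \<Rightarrow> real. (\<exists>j<k. c j \<noteq> 0) \<longrightarrow>
        bform G I (\<lambda>i. \<Sum>j<k. c j * xs j i) (\<lambda>i. \<Sum>j<k. c j * xs j i) > 0"
  assume "?P 2"
  have bound: "k \<le> card I" if "?P k" for k
  proof (rule ccontr)
    assume "\<not> k \<le> card I"
    from that obtain xs where xs: "\<forall>c :: nat \<Rightarrow> real. (\<exists>j<k. c j \<noteq> 0) \<longrightarrow>
        bform G I (\<lambda>i. \<Sum>j<k. c j * xs j i) (\<lambda>i. \<Sum>j<k. c j * xs j i) > 0" by blast
    from exists_rel[of I "{..<k}" xs] assms \<open>\<not> k \<le> card I\<close> obtain c where
      c: "\<exists>j\<in>{..<k}. c j \<noteq> 0" "\<forall>i\<in>I. (\<Sum>j\<in>{..<k}. c j * xs j i) = 0" by auto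
    have "bform G I (\<lambda>i. \<Sum>j<k. c j * xs j i) (\<lambda>i. \<Sum>j<k. c j * xs j i) = 0"
      using c(2) by (intro bform_zero_left) auto
    with xs c(1) show False by auto
  qed
  have "2 \<le> Greatest ?P" by (rule Greatest_le_nat[of ?P 2 "card I"]) (use \<open>?P 2\<close> bound in auto)
  then show False using assms(2) unfolding pos_index_def by simp
qed

lemma hgram_decomp:
  fixes x y :: "'a option \<Rightarrow> 'r::comm_ring_1"
  assumes "finite V"
  shows "bform (hgram E D) (hindex V) x y =
     x None * of_int (2 * D) * y None + x None * (\<Sum>v\<in>V. y (Some v)) + (\<Sum>v\<in>V. x (Some v)) * y None
     + bform (ggram E) V (\<lambda>v. x (Some v)) (\<lambda>v. y (Some v))"
proof -
  have nn: "None \<notin> Some ` V" by auto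
  have inj: "inj_on Some V" by auto
  show ?thesis
    unfolding bform_def hindex_def using assms nn
    by (simp add: sum.insert sum.reindex[OF inj] hgram_def sum.distrib sum_distrib_left sum_distrib_right algebra_simps)
qed

lemma real_indep2:
  fixes \<alpha> \<beta> :: "nat \<Rightarrow> int" and l m :: real
  assumes ind: "\<forall>l m::int. (\<forall>t<n. l * \<alpha> t + m * \<beta> t = 0) \<longrightarrow> l = 0 \<and> m = 0"
    and rel: "\<forall>t<n. l * of_int (\<alpha> t) + m * of_int (\<beta> t) = 0"
  shows "l = 0 \<and> m = 0"
proof (rule ccontr)
  assume nz: "\<not> (l = 0 \<and> m = 0)"
  have "\<exists>t0<n. \<alpha> t0 \<noteq> 0"
  proof (rule ccontr)
    assume "\<not> ?thesis"
    then have "\<forall>t<n. 1 * \<alpha> t + 0 * \<beta> t = 0" by auto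
    with ind[rule_format, of 1 0] show False by simp
  qed
  then obtain t0 where t0: "t0 < n" "\<alpha> t0 \<noteq> 0" by blast
  have cross: "of_int (\<alpha> t) * of_int (\<beta> t0) = (of_int (\<alpha> t0) * of_int (\<beta> t) :: real)" if "t < n" for t
  proof (cases "l = 0")
    case True
    with nz have "m \<noteq> 0" by auto
    have "m * of_int (\<beta> t) = 0" "m * of_int (\<beta> t0) = 0" using True rel that t0 by auto
    with \<open>m \<noteq> 0\<close> have "\<beta> t = 0" "\<beta> t0 = 0" by auto
    then show ?thesis by simp
  next
    case False
    have e1: "l * of_int (\<alpha> t) + m * of_int (\<beta> t) = 0" using rel that by auto
    have e2: "l * of_int (\<alpha> t0) + m * of_int (\<beta> t0) = 0" using rel t0 by auto
    have "l * (of_int (\<alpha> t) * of_int (\<beta> t0) - of_int (\<alpha> t0) * of_int (\<beta> t)) = 0"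
    proof -
      have a1: "l * of_int (\<alpha> t) = - m * of_int (\<beta> t)" using e1 by linarith
      have a2: "l * of_int (\<alpha> t0) = - m * of_int (\<beta> t0)" using e2 by linarith
      have "l * (of_int (\<alpha> t) * of_int (\<beta> t0) - of_int (\<alpha> t0) * of_int (\<beta> t))
          = (l * of_int (\<alpha> t)) * of_int (\<beta> t0) - (l * of_int (\<alpha> t0)) * of_int (\<beta> t)"
        by (simp add: algebra_simps)
      also have "\<dots> = 0" unfolding a1 a2 by simp
      finally show ?thesis .
    qed
    with False show ?thesis by simp
  qed
  have "\<forall>t<n. \<beta> t0 * \<alpha> t + (- \<alpha> t0) * \<beta> t = 0"
  proof (intro allI impI)
    fix t assume "t < n"
    from cross[OF this] have "\<alpha> t * \<beta> t0 = \<alpha> t0 * \<beta> t"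
      by (metis of_int_eq_iff of_int_mult)
    then show "\<beta> t0 * \<alpha> t + (- \<alpha> t0) * \<beta> t = 0" by (simp add: algebra_simps)
  qed
  with ind have "\<beta> t0 = 0 \<and> - \<alpha> t0 = 0" by (elim allE[of _ "\<beta> t0"] allE[of _ "- \<alpha> t0"]) simp
  with t0 show False by simp
qed

lemma k3_eval:
  fixes g0 g1 g2 :: real
  shows "bform k3gram {..<22} (\<lambda>k. if k = 0 \<or> k = 1 then g0 else if k = 2 \<or> k = 3 then g1 else if k = 4 \<or> k = 5 then g2 else 0)
             (\<lambda>k. if k = 0 \<or> k = 1 then g0 else if k = 2 \<or> k = 3 then g1 else if k = 4 \<or> k = 5 then g2 else 0)
         = 2 * (g0^2 + g1^2 + g2^2)"
proof -
  let ?q = "\<lambda>k::nat. if k = 0 \<or> k = 1 then g0 else if k = 2 \<or> k = 3 then g1 else if k = 4 \<or> k = 5 then g2 else 0"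
  have split: "{..<22::nat} = {..<6} \<union> {6..<22}" by auto
  have six: "{..<6::nat} = {0,1,2,3,4,5}" by auto
  have z: "?q k = 0" if "k \<in> {6..<22}" for k using that by auto
  have "bform k3gram {..<22} ?q ?q = (\<Sum>i\<in>{..<22}. \<Sum>j\<in>{..<6}. ?q i * of_int (k3gram i j) * ?q j)"
    unfolding bform_def by (intro sum.cong refl sum.mono_neutral_right) auto
  also have "\<dots> = (\<Sum>i\<in>{..<6}. \<Sum>j\<in>{..<6}. ?q i * of_int (k3gram i j) * ?q j)"
    by (intro sum.mono_neutral_right) auto
  also have "\<dots> = 2 * (g0^2 + g1^2 + g2^2)"
    by (simp add: six k3gram_def power2_eq_square algebra_simps)
  finally show ?thesis .
qed


lemma bform_unit_right:
  assumes "finite V" "v \<in> V"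
  shows "bform G V x (unitv v :: 'i \<Rightarrow> 'r::comm_ring_1) = (\<Sum>i\<in>V. x i * of_int (G i v))"
proof -
  have "bform G V x (unitv v) = (\<Sum>i\<in>V. \<Sum>j\<in>V. if j = v then x i * of_int (G i v) else (0::'r))"
    unfolding bform_def unitv_def by (intro sum.cong refl) auto
  then show ?thesis using assms by simp
qed

lemma bform_unit_left:
  assumes "finite V" "v \<in> V"
  shows "bform G V (unitv v :: 'i \<Rightarrow> 'r::comm_ring_1) y = (\<Sum>j\<in>V. of_int (G v j) * y j)"
proof -
  have "bform G V (unitv v) y = (\<Sum>i\<in>V. if i = v then (\<Sum>j\<in>V. of_int (G v j) * y j) else (0::'r))"
    unfolding bform_def unitv_def by (intro sum.cong refl) auto
  then show ?thesis using assms by simp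
qed

lemma bform_expand_left:
  assumes "finite V"
  shows "bform G V (x :: 'i \<Rightarrow> 'r::comm_ring_1) y = (\<Sum>i\<in>V. x i * bform G V (unitv i) y)"
proof -
  have "(\<Sum>i\<in>V. x i * bform G V (unitv i) y) = (\<Sum>i\<in>V. x i * (\<Sum>j\<in>V. of_int (G i j) * y j))"
    using assms by (intro sum.cong refl) (simp add: bform_unit_left)
  then show ?thesis by (simp add: bform_def sum_distrib_left mult.assoc)
qed

lemma ggram_sym:
  assumes "\<forall>u v. E u v \<longrightarrow> E v u"
  shows "ggram E u v = ggram E v u"
  using assms unfolding ggram_def by auto

lemma hG_from_kernel:
  fixes z :: "'a option \<Rightarrow> int"
  assumes fin: "finite V" and sym: "\<forall>u v. E u v \<longrightarrow> E v u"
    and m: "z None \<noteq> 0" and ker: "\<forall>y. bform (hgram E D) (hindex V) z y = 0"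
  shows "\<exists>hG :: 'a \<Rightarrow> rat.
           (\<forall>v\<in>V. bform (ggram E) V (unitv v) hG = 1) \<and>
           2 * of_int D = bform (ggram E) V hG hG"
proof -
  define m where "m = z None"
  define X where "X = (\<lambda>v. z (Some v))"
  have e1: "m * (2 * D) + (\<Sum>v\<in>V. X v) = 0"
  proof -
    have "bform (hgram E D) (hindex V) z (unitv None) = 0" using ker by simp
    moreover have "bform (ggram E) V X (\<lambda>v. unitv None (Some v)) = 0"
      unfolding bform_def unitv_def by simp
    ultimately show ?thesis
      unfolding hgram_decomp[OF fin] by (simp add: m_def X_def unitv_def)
  qed
  have e2: "(\<Sum>i\<in>V. X i * ggram E i v) = - m" if "v \<in> V" for v
  proof -
    have "bform (hgram E D) (hindex V) z (unitv (Some v)) = 0" using ker by simp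
    moreover have "(\<lambda>u. unitv (Some v) (Some u) :: int) = unitv v" by (auto simp: unitv_def)
    moreover have "(\<Sum>u\<in>V. unitv v u :: int) = 1" using that fin by (simp add: unitv_def)
    ultimately have "m + bform (ggram E) V X (unitv v) = 0"
      unfolding hgram_decomp[OF fin] by (simp add: m_def X_def unitv_def)
    then show ?thesis using bform_unit_right[OF fin that, of "ggram E" X] by simp
  qed
  define hG where "hG = (\<lambda>v. - of_int (X v) / (of_int m :: rat))"
  have m0: "(of_int m :: rat) \<noteq> 0" using m by (simp add: m_def)
  have h1: "bform (ggram E) V (unitv v) hG = 1" if "v \<in> V" for v
  proof -
    have "bform (ggram E) V (unitv v) hG = (\<Sum>j\<in>V. of_int (ggram E v j) * hG j)"
      by (rule bform_unit_left[OF fin that])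
    also have "\<dots> = - (of_int (\<Sum>j\<in>V. X j * ggram E j v)) / of_int m"
      unfolding hG_def by (simp add: sum_divide_distrib[symmetric] ggram_sym[OF sym, of v] mult.commute sum_negf)
    also have "\<dots> = 1" using e2[OF that] m0 by simp
    finally show ?thesis .
  qed
  have "bform (ggram E) V hG hG = (\<Sum>i\<in>V. hG i * bform (ggram E) V (unitv i) hG)"
    by (rule bform_expand_left[OF fin])
  also have "\<dots> = (\<Sum>i\<in>V. hG i)" using h1 by simp
  also have "\<dots> = - of_int (\<Sum>v\<in>V. X v) / of_int m"
    unfolding hG_def by (simp add: sum_divide_distrib[symmetric] sum_negf)
  also have "\<dots> = 2 * of_int D"
  proof -
    have "(\<Sum>v\<in>V. X v) = - (m * (2 * D))" using e1 by linarith
    then show ?thesis using m0 by simp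
  qed
  finally have "bform (ggram E) V hG hG = 2 * of_int D" .
  then show ?thesis using h1 by (intro exI[of _ hG]) auto
qed


lemma six_cases:
  fixes k :: nat and cx cy :: real and ax ay az bx bw bz :: int
  shows "cx * of_int (- (ax * (if k = 0 \<or> k = 1 then 1 else 0) + ay * (if k = 2 \<or> k = 3 then 1 else 0) + az * (if k = 4 \<or> k = 5 then 1 else 0)))
   + cy * of_int (- (bx * (if k = 0 \<or> k = 1 then 1 else 0) + bw * (if k = 2 \<or> k = 3 then 1 else 0) + bz * (if k = 4 \<or> k = 5 then 1 else 0)))
  = - (if k = 0 \<or> k = 1 then cx * of_int ax + cy * of_int bx else if k = 2 \<or> k = 3 then cx * of_int ay + cy * of_int bw
       else if k = 4 \<or> k = 5 then cx * of_int az + cy * of_int bz else 0)"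
proof -
  have "k = 0 \<or> k = 1 \<or> k = 2 \<or> k = 3 \<or> k = 4 \<or> k = 5 \<or> k > (5::nat)" by arith
  then show ?thesis by (elim disjE) simp_all
qed

theorem corollary2p9:
  fixes V :: "'a set" and E :: "'a \<Rightarrow> 'a \<Rightarrow> bool" and D :: int
  assumes "finite V"
    and "\<forall>u v. E u v \<longrightarrow> E v u"
    and "\<forall>u. \<not> E u u"
    and "pos_index (ggram E) V = 1"
    and "lat_rank (ggram E) V = 20"
    and "D \<ge> 2"
    and "geometric (hgram E D) (hindex V) (unitv None) D"
  shows "\<exists>hG :: 'a \<Rightarrow> rat.
           (\<forall>v\<in>V. bform (ggram E) V (unitv v) hG = 1) \<and>
           2 * of_int D = bform (ggram E) V hG hG"
proof (rule ccontr)
  assume noh: "\<not> ?thesis"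
  let ?I = "hindex V" and ?G = "hgram E D"
  have finI: "finite ?I" using assms(1) by (simp add: hindex_def)
  from assms(7) have pos1: "pos_index ?G ?I = 1"
    unfolding geometric_def admissible_def polarized_def by auto
  from assms(7) obtain f where
    fG: "\<forall>i\<in>?I. \<forall>j\<in>?I. bform k3gram {..<22} (f i) (f j) = ?G i j"
    unfolding geometric_def prim_embeds_K3_def by blast
  have fG': "\<forall>i\<in>?I. \<forall>j\<in>?I. ?G i j = bform k3gram {..<22} (f i) (f j)" using fG by simp
  from lat_rank_witness[OF assms(1) assms(5)] obtain xs :: "nat \<Rightarrow> 'a \<Rightarrow> int" where
    xs: "\<forall>c :: nat \<Rightarrow> int. (\<forall>y. bform (ggram E) V (\<lambda>i. \<Sum>j<20. c j * xs j i) y = 0) \<longrightarrow> (\<forall>j<20. c j = 0)"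
    by blast
  define x' where "x' = (\<lambda>j (p::'a option). if j = (20::nat) then (if p = None then 1 else 0)
                         else (case p of None \<Rightarrow> 0 | Some v \<Rightarrow> xs j v))"
  define w where "w = (\<lambda>j k. \<Sum>i\<in>?I. x' j i * f i k)"
  have Windep: "\<forall>j<21. n j = 0" if hn: "\<forall>k<22. (\<Sum>j<21. n j * w j k) = 0" for n :: "nat \<Rightarrow> int"
  proof -
    define z where "z = (\<lambda>i. \<Sum>j<21. n j * x' j i)"
    have Fz: "(\<Sum>i\<in>?I. z i * f i k) = (\<Sum>j<21. n j * w j k)" for k
      unfolding z_def w_def by (simp add: sum_distrib_right sum_distrib_left mult.assoc) (rule sum.swap)
    have ker: "\<forall>y. bform ?G ?I z y = 0"
    proof
      fix y
      show "bform ?G ?I z y = 0"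
        unfolding bform_push[OF fG', of z y]
        by (rule bform_zero_left) (use Fz hn in simp)
    qed
    have split21: "{..<21::nat} = insert 20 {..<20}" by auto
    have zNone: "z None = n 20" unfolding z_def split21 by (simp add: x'_def)
    have zSome: "z (Some v) = (\<Sum>j<20. n j * xs j v)" for v
      unfolding z_def split21 by (simp add: x'_def)
    show ?thesis
    proof (cases "n 20 = 0")
      case False
      with hG_from_kernel[OF assms(1) assms(2), of z D] zNone ker noh show ?thesis by auto
    next
      case True
      have "\<forall>y. bform (ggram E) V (\<lambda>i. \<Sum>j<20. n j * xs j i) y = 0"
      proof
        fix y :: "'a \<Rightarrow> int"
        define y' where "y' = (\<lambda>p. case p of None \<Rightarrow> 0 | Some v \<Rightarrow> y v)"
        have "bform ?G ?I z y' = 0" using ker by simp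
        then show "bform (ggram E) V (\<lambda>i. \<Sum>j<20. n j * xs j i) y = 0"
          unfolding hgram_decomp[OF assms(1)] using True zNone zSome
          by (simp add: y'_def)
      qed
      with xs have "\<forall>j<20. n j = 0" by blast
      show ?thesis
      proof (intro allI impI)
        fix j :: nat assume "j < 21"
        then have "j < 20 \<or> j = 20" by auto
        then show "n j = 0" using True \<open>\<forall>j<20. n j = 0\<close> by auto
      qed
    qed
  qed
  define pp where "pp = (\<lambda>(t::nat) (k::nat). if k = 2 * t \<or> k = 2 * t + 1 then (1::int) else 0)"
  define vv where "vv = (\<lambda>j k. if j < 21 then w j k else pp (j - 21) k)"
  have split24: "(\<Sum>j<24. e j * vv j k) = (\<Sum>j<21. e j * w j k) + e 21 * pp 0 k + e 22 * pp 1 k + e 23 * pp 2 k"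
    for e :: "nat \<Rightarrow> int" and k
  proof -
    have "{..<24::nat} = {..<21} \<union> {21,22,23}" by auto
    then have "(\<Sum>j<24. e j * vv j k) = (\<Sum>j<21. e j * vv j k) + (\<Sum>j\<in>{21,22,23}. e j * vv j k)"
      by (simp add: sum.union_disjoint)
    moreover have "(\<Sum>j<21. e j * vv j k) = (\<Sum>j<21. e j * w j k)"
      by (intro sum.cong refl) (simp add: vv_def)
    ultimately show ?thesis by (simp add: vv_def)
  qed
  from exists_rel[of "{..<22::nat}" "{..<24::nat}" vv] obtain c where
    c: "\<exists>j\<in>{..<24}. c j \<noteq> 0" "\<forall>k\<in>{..<22}. (\<Sum>j\<in>{..<24}. c j * vv j k) = 0" by auto
  then obtain j0 where j0: "j0 < 24" "c j0 \<noteq> 0" by auto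
  have "card {..<22::nat} < card ({..<24::nat} - {j0})" using j0 by simp
  from exists_rel[of "{..<22::nat}" "{..<24::nat} - {j0}" vv, OF _ _ this] obtain d0 where
    d0: "\<exists>j\<in>{..<24} - {j0}. d0 j \<noteq> 0" "\<forall>k\<in>{..<22}. (\<Sum>j\<in>{..<24} - {j0}. d0 j * vv j k) = 0" by auto
  define d where "d = (\<lambda>j. if j = j0 then 0 else d0 j)"
  have d: "\<forall>k\<in>{..<22}. (\<Sum>j\<in>{..<24}. d j * vv j k) = 0"
  proof
    fix k :: nat assume k: "k \<in> {..<22}"
    have "(\<Sum>j\<in>{..<24}. d j * vv j k) = d j0 * vv j0 k + (\<Sum>j\<in>{..<24} - {j0}. d j * vv j k)"
      using j0 by (simp add: sum.remove)
    also have "(\<Sum>j\<in>{..<24} - {j0}. d j * vv j k) = (\<Sum>j\<in>{..<24} - {j0}. d0 j * vv j k)"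
      by (intro sum.cong refl) (simp add: d_def)
    finally show "(\<Sum>j\<in>{..<24}. d j * vv j k) = 0" using d0 k by (simp add: d_def)
  qed
  obtain j1 where j1: "j1 < 24" "j1 \<noteq> j0" "d j1 \<noteq> 0" using d0 by (auto simp: d_def)
  define \<alpha> where "\<alpha> = (\<lambda>t. c (21 + t))"
  define \<beta> where "\<beta> = (\<lambda>t. d (21 + t))"
  have ind: "\<forall>l m::int. (\<forall>t<3. l * \<alpha> t + m * \<beta> t = 0) \<longrightarrow> l = 0 \<and> m = 0"
  proof (intro allI impI)
    fix l m :: int assume h: "\<forall>t<3. l * \<alpha> t + m * \<beta> t = 0"
    define e where "e = (\<lambda>j. l * c j + m * d j)"
    have erel: "(\<Sum>j<24. e j * vv j k) = 0" if "k < 22" for k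
    proof -
      have "(\<Sum>j<24. e j * vv j k) = l * (\<Sum>j<24. c j * vv j k) + m * (\<Sum>j<24. d j * vv j k)"
        unfolding e_def by (simp add: sum.distrib sum_distrib_left algebra_simps)
      then show ?thesis using c(2) d that by simp
    qed
    have e2123: "e 21 = 0" "e 22 = 0" "e 23 = 0"
      using h[rule_format, of 0] h[rule_format, of 1] h[rule_format, of 2]
      by (auto simp: e_def \<alpha>_def \<beta>_def)
    have "\<forall>k<22. (\<Sum>j<21. e j * w j k) = 0"
      using erel split24[of e] e2123 by simp
    then have e21: "\<forall>j<21. e j = 0" by (rule Windep)
    have eall: "e j = 0" if "j < 24" for j
    proof -
      have "j < 21 \<or> j = 21 \<or> j = 22 \<or> j = 23" using that by auto
      then show ?thesis using e21 e2123 by auto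
    qed
    have "l * c j0 = 0" using eall[OF j0(1)] by (simp add: e_def d_def)
    with j0 have l0: "l = 0" by simp
    have "m * d j1 = 0" using eall[OF j1(1)] l0 by (simp add: e_def)
    with j1 have "m = 0" by simp
    with l0 show "l = 0 \<and> m = 0" by simp
  qed
  define u1 where "u1 = (\<lambda>i. \<Sum>j<21. (of_int (c j) :: real) * of_int (x' j i))"
  define u2 where "u2 = (\<lambda>i. \<Sum>j<21. (of_int (d j) :: real) * of_int (x' j i))"
  define xs2 where "xs2 = (\<lambda>j::nat. if j = 0 then u1 else u2)"
  have Su: "(\<Sum>i\<in>?I. (\<Sum>j<21. (of_int (e j) :: real) * of_int (x' j i)) * of_int (f i k))
            = of_int (\<Sum>j<21. e j * w j k)" for e :: "nat \<Rightarrow> int" and k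
    unfolding w_def by (simp add: sum_distrib_right sum_distrib_left mult.assoc) (rule sum.swap)
  have ppv: "pp 0 k = (if k = 0 \<or> k = 1 then 1 else 0)" "pp 1 k = (if k = 2 \<or> k = 3 then 1 else 0)"
     "pp 2 k = (if k = 4 \<or> k = 5 then 1 else 0)" for k
    by (auto simp: pp_def)
  have P2: "\<forall>c'::nat \<Rightarrow> real. (\<exists>j<2. c' j \<noteq> 0) \<longrightarrow>
        bform ?G ?I (\<lambda>i. \<Sum>j<2. c' j * xs2 j i) (\<lambda>i. \<Sum>j<2. c' j * xs2 j i) > 0"
  proof (intro allI impI)
    fix c' :: "nat \<Rightarrow> real" assume nz: "\<exists>j<2. c' j \<noteq> 0"
    have two: "{..<2::nat} = {0,1}" by auto
    define vr where "vr = (\<lambda>i. \<Sum>j<2. c' j * xs2 j i)"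
    have vr: "vr i = c' 0 * u1 i + c' 1 * u2 i" for i unfolding vr_def two xs2_def by simp
    define \<gamma> where "\<gamma> = (\<lambda>t. c' 0 * of_int (\<alpha> t) + c' 1 * of_int (\<beta> t))"
    define qq where "qq = (\<lambda>k::nat. if k = 0 \<or> k = 1 then \<gamma> 0 else if k = 2 \<or> k = 3 then \<gamma> 1
                          else if k = 4 \<or> k = 5 then \<gamma> 2 else 0)"
    have Fv: "(\<Sum>i\<in>?I. vr i * of_int (f i k)) = - qq k" if "k < 22" for k
    proof -
      have "(\<Sum>i\<in>?I. vr i * of_int (f i k)) = c' 0 * (\<Sum>i\<in>?I. u1 i * of_int (f i k)) + c' 1 * (\<Sum>i\<in>?I. u2 i * of_int (f i k))"
        unfolding vr by (simp add: sum.distrib sum_distrib_left algebra_simps)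
      also have "(\<Sum>i\<in>?I. u1 i * of_int (f i k)) = of_int (\<Sum>j<21. c j * w j k)"
        unfolding u1_def by (rule Su)
      also have "(\<Sum>i\<in>?I. u2 i * of_int (f i k)) = of_int (\<Sum>j<21. d j * w j k)"
        unfolding u2_def by (rule Su)
      also have "(\<Sum>j<21. c j * w j k) = - (\<alpha> 0 * pp 0 k + \<alpha> 1 * pp 1 k + \<alpha> 2 * pp 2 k)"
        using split24[of c k] c(2) that by (simp add: \<alpha>_def)
      also have "(\<Sum>j<21. d j * w j k) = - (\<beta> 0 * pp 0 k + \<beta> 1 * pp 1 k + \<beta> 2 * pp 2 k)"
        using split24[of d k] d that by (simp add: \<beta>_def)
      finally have "(\<Sum>i\<in>?I. vr i * of_int (f i k)) = c' 0 * of_int (- (\<alpha> 0 * pp 0 k + \<alpha> 1 * pp 1 k + \<alpha> 2 * pp 2 k))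
          + c' 1 * of_int (- (\<beta> 0 * pp 0 k + \<beta> 1 * pp 1 k + \<beta> 2 * pp 2 k))" .
      also have "\<dots> = - qq k"
        apply (unfold ppv qq_def \<gamma>_def) apply (rule six_cases) done
      finally show ?thesis .
    qed
    have "bform ?G ?I vr vr = bform k3gram {..<22} (\<lambda>k. \<Sum>i\<in>?I. vr i * of_int (f i k)) (\<lambda>k. \<Sum>i\<in>?I. vr i * of_int (f i k))"
      by (rule bform_push[OF fG'])
    also have "\<dots> = bform k3gram {..<22} (\<lambda>k. - qq k) (\<lambda>k. - qq k)"
      by (rule bform_cong) (auto simp: Fv)
    also have "\<dots> = bform k3gram {..<22} qq qq" unfolding bform_def by simp
    also have "\<dots> = 2 * ((\<gamma> 0)^2 + (\<gamma> 1)^2 + (\<gamma> 2)^2)" unfolding qq_def by (rule k3_eval)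
    finally have val: "bform ?G ?I vr vr = 2 * ((\<gamma> 0)^2 + (\<gamma> 1)^2 + (\<gamma> 2)^2)" .
    have "\<exists>t<3. \<gamma> t \<noteq> 0"
    proof (rule ccontr)
      assume "\<not> ?thesis"
      then have "\<forall>t<3. c' 0 * of_int (\<alpha> t) + c' 1 * of_int (\<beta> t) = 0" by (auto simp: \<gamma>_def)
      from real_indep2[OF ind this] have "c' 0 = 0" "c' 1 = 0" by auto
      from nz obtain j where "j < 2" "c' j \<noteq> 0" by blast
      then have "j = 0 \<or> j = 1" by auto
      then show False using \<open>c' j \<noteq> 0\<close> \<open>c' 0 = 0\<close> \<open>c' 1 = 0\<close> by auto
    qed
    then have "(\<gamma> 0)^2 + (\<gamma> 1)^2 + (\<gamma> 2)^2 > 0"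
    proof -
      assume "\<exists>t<3. \<gamma> t \<noteq> 0"
      then obtain t where "t < 3" "\<gamma> t \<noteq> 0" by blast
      then have "t = 0 \<or> t = 1 \<or> t = 2" by auto
      have gt: "(\<gamma> t)^2 > 0" using \<open>\<gamma> t \<noteq> 0\<close> by simp
      have p: "(\<gamma> 0)^2 \<ge> 0" "(\<gamma> 1)^2 \<ge> 0" "(\<gamma> 2)^2 \<ge> 0" by simp_all
      from \<open>t = 0 \<or> t = 1 \<or> t = 2\<close> show ?thesis
      proof (elim disjE)
        assume "t = 0" with gt have "(\<gamma> 0)^2 > 0" by simp
        with p show ?thesis by linarith
      next
        assume "t = 1" with gt have "(\<gamma> 1)^2 > 0" by simp
        with p show ?thesis by linarith
      next
        assume "t = 2" with gt have "(\<gamma> 2)^2 > 0" by simp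
        with p show ?thesis by linarith
      qed
    qed
    with val show "bform ?G ?I (\<lambda>i. \<Sum>j<2. c' j * xs2 j i) (\<lambda>i. \<Sum>j<2. c' j * xs2 j i) > 0"
      unfolding vr_def by simp
  qed
  with pos_index_no2[OF finI pos1] show False by blast
qed

end
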